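(* Consider problem (P): minimize $F(\mathbf{x})=\mathbf{A}\otimes\mathbf{x}$ over $\mathbf{x}\in\mathcal{X}$, under the standing assumptions stated in the context. If (P) is solvable, then: (i) every entry $b_i$ ($i=1,\dots,m$) of the vector $\mathbf{b}$ defined in the context is a real number (i.e. $b_i\neq-\infty$); (ii) every entry $x^*_j(\mathbf{A},\mathbf{b})$ ($j=1,\dots,n$) of the vector $\mathbf{x}^*(\mathbf{A},\mathbf{b})$ defined in the context is a real number (i.e. neither $-\infty$ nor $+\infty$).
   Context: Max-plus algebra: $\mathbb{R}_{\max}=\mathbb{R}\cup\{-\infty\}$ with $a\oplus b=\max\{a,b\}$ and $a\otimes b=a+b$; $\varepsilon=-\infty$. For $\mathbf{A}=(a_{ij})\in\mathbb{R}_{\max}^{m\times n}$ and $\mathbf{x}=(x_j)\in\mathbb{R}^n$, $\mathbf{A}\otimes\mathbf{x}$ is the vector with $i$th component $F_i(\mathbf{x})=\max_{1\le j\le n}(a_{ij}+x_j)$, with $r+(-\infty)=-\infty$. Vectors are compared componentwise. Problem (P): given $\mathbf{A}=(a_{ij})\in\mathbb{R}_{\max}^{m\times n}$, reals $k_1,\dots,k_n\ge 0$ not all zero, and $c\in\mathbb{R}$, let $\mathcal{X}=\{\mathbf{x}\in\mathbb{R}^n : \sum_{j=1}^n k_jx_j=c\}$ and $F(\mathbf{x})=\mathbf{A}\otimes\mathbf{x}$. A point $\tilde{\mathbf{x}}\in\mathcal{X}$ is a globally optimal solution of (P) if $F(\mathbf{x})\ge F(\tilde{\mathbf{x}})$ componentwise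 for every $\mathbf{x}\in\mathcal{X}$; (P) is solvable if a globally optimal solution exists. Standing assumptions: (1) no row of $\mathbf{A}$ consists entirely of $-\infty$ entries; (2) if the $j$th column of $\mathbf{A}$ consists entirely of $-\infty$ entries, then $k_j>0$. Let $\mathcal{J}=\{j : k_j>0\}$. Define $\mathbf{b}=(b_i)$ by $b_i=-\infty$ if $a_{ij}=-\infty$ for some $j\in\mathcal{J}$, and otherwise $b_i=\frac{\sum_{j\in\mathcal{J}}k_ja_{ij}+c}{\sum_{j\in\mathcal{J}}k_j}$. Define $\mathbf{x}^*(\mathbf{A},\mathbf{b})=(x^*_j(\mathbf{A},\mathbf{b}))$ by $x^*_j(\mathbf{A},\mathbf{b})=\min_{1\le i\le m}(b_i-a_{ij})$, with the conventions, for $r\in\mathbb{R}$: $r-(-\infty)=+\infty$, $(-\infty)-r=-\infty$, $(-\infty)-(-\infty)=+\infty$; thus $x^*_j(\mathbf{A},\mathbf{b})\in\mathbb{R}\cup\{-\infty,+\infty\}$. *)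

theory Defs
  imports "HOL-Analysis.Analysis"
begin

text \<open>Entries of A lie in R_max = R \<union> {-\<infinity>}, modelled in ereal
 (the hypothesis that no entry is +\<infinity> is stated in the theorem).\<close>

definition mp_F :: "(nat \<Rightarrow> nat \<Rightarrow> ereal) \<Rightarrow> nat \<Rightarrow> (nat \<Rightarrow> real) \<Rightarrow> nat \<Rightarrow> ereal" where
  "mp_F A n x i = Max ((\<lambda>j. A i j + ereal (x j)) ` {1..n})"

definition mp_feasible :: "nat \<Rightarrow> (nat \<Rightarrow> real) \<Rightarrow> real \<Rightarrow> (nat \<Rightarrow> real) \<Rightarrow> bool" where
  "mp_feasible n k c x \<longleftrightarrow> (\<Sum>j\<in>{1..n}. k j * x j) = c"

definition mp_global_opt ::
  "(nat \<Rightarrow> nat \<Rightarrow> ereal) \<Rightarrow> nat \<Rightarrow> nat \<Rightarrow> (nat \<Rightarrow> real) \<Rightarrow> real \<Rightarrow> (nat \<Rightarrow> real) \<Rightarrow> bool" where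
  "mp_global_opt A m n k c xt \<longleftrightarrow> mp_feasible n k c xt \<and>
     (\<forall>x. mp_feasible n k c x \<longrightarrow> (\<forall>i\<in>{1..m}. mp_F A n x i \<ge> mp_F A n xt i))"

definition mp_solvable :: "(nat \<Rightarrow> nat \<Rightarrow> ereal) \<Rightarrow> nat \<Rightarrow> nat \<Rightarrow> (nat \<Rightarrow> real) \<Rightarrow> real \<Rightarrow> bool" where
  "mp_solvable A m n k c \<longleftrightarrow> (\<exists>xt. mp_global_opt A m n k c xt)"

definition mp_J :: "nat \<Rightarrow> (nat \<Rightarrow> real) \<Rightarrow> nat set" where
  "mp_J n k = {j\<in>{1..n}. k j > 0}"

definition mp_b :: "(nat \<Rightarrow> nat \<Rightarrow> ereal) \<Rightarrow> nat \<Rightarrow> (nat \<Rightarrow> real) \<Rightarrow> real \<Rightarrow> nat \<Rightarrow> ereal" where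
  "mp_b A n k c i =
     (if \<exists>j\<in>mp_J n k. A i j = -\<infinity> then -\<infinity>
      else ereal (((\<Sum>j\<in>mp_J n k. k j * real_of_ereal (A i j)) + c) / (\<Sum>j\<in>mp_J n k. k j)))"

text \<open>Residuation subtraction with the paper's conventions:
 r - (-\<infinity>) = +\<infinity>, (-\<infinity>) - r = -\<infinity>, (-\<infinity>) - (-\<infinity>) = +\<infinity>.\<close>
definition mp_minus :: "ereal \<Rightarrow> ereal \<Rightarrow> ereal" where
  "mp_minus a b = (if b = -\<infinity> then \<infinity> else a - b)"

definition mp_xstar :: "(nat \<Rightarrow> nat \<Rightarrow> ereal) \<Rightarrow> nat \<Rightarrow> (nat \<Rightarrow> ereal) \<Rightarrow> nat \<Rightarrow> ereal" where
  "mp_xstar A m b j = (INF i\<in>{1..m}. mp_minus (b i) (A i j))"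

end

theory Submission
  imports Defs
begin

lemma key:
  fixes A :: "nat \<Rightarrow> nat \<Rightarrow> ereal" and m n :: nat and k :: "nat \<Rightarrow> real" and c :: real
  assumes A_rmax: "\<forall>i\<in>{1..m}. \<forall>j\<in>{1..n}. A i j \<noteq> \<infinity>"
    and rows: "\<forall>i\<in>{1..m}. \<exists>j\<in>{1..n}. A i j \<noteq> -\<infinity>"
    and solv: "mp_solvable A m n k c"
    and i: "i \<in> {1..m}" and j0: "j0 \<in> {1..n}" and kj0: "k j0 > 0"
  shows "A i j0 \<noteq> -\<infinity>"
proof
  assume Aj0: "A i j0 = -\<infinity>"
  obtain xt where opt: "mp_global_opt A m n k c xt" using solv mp_solvable_def by blast
  obtain j1 where j1: "j1 \<in> {1..n}" "A i j1 \<noteq> -\<infinity>" using rows i by blast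
  have fin: "finite {1..n}" "{1..n} \<noteq> {}" using j0 by auto
  obtain a1 where a1: "A i j1 = ereal a1" using j1 A_rmax i by (cases "A i j1") auto
  define R where "R = a1 + xt j1"
  have FR: "ereal R \<le> mp_F A n xt i"
    unfolding mp_F_def R_def using j1 a1 fin by (intro Max_ge_iff[THEN iffD2]) force+
  define M where "M = Max ((\<lambda>l. A i l) ` {1..n})"
  have Mle: "\<And>l. l \<in> {1..n} \<Longrightarrow> A i l \<le> M" unfolding M_def using fin by auto
  have Mne: "M \<noteq> \<infinity>" unfolding M_def using fin A_rmax i
    by (metis (no_types, lifting) Max_in finite_imageI image_iff image_is_empty)
  have "M \<ge> ereal a1" using Mle[OF j1(1)] a1 by simp
  then obtain mr where mr: "M = ereal mr" using Mne by (cases M) auto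
  define S where "S = (\<Sum>l\<in>{1..n}-{j0}. k l)"
  define t where "t = mr - R + 1"
  define x where "x = (\<lambda>l. if l = j0 then (c + t * S) / k j0 else - t)"
  have "(\<Sum>j\<in>{1..n}. k j * x j) = k j0 * x j0 + (\<Sum>j\<in>{1..n}-{j0}. k j * x j)"
    using j0 fin by (simp add: sum.remove)
  also have "(\<Sum>j\<in>{1..n}-{j0}. k j * x j) = (\<Sum>j\<in>{1..n}-{j0}. - t * k j)"
    by (rule sum.cong) (auto simp: x_def)
  also have "\<dots> = - t * S" by (simp add: S_def sum_distrib_left)
  finally have feas: "mp_feasible n k c x" unfolding mp_feasible_def x_def using kj0 by simp
  have "mp_F A n x i \<ge> mp_F A n xt i" using opt feas i mp_global_opt_def by blast
  moreover have "mp_F A n x i \<le> ereal (mr - t)"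
    unfolding mp_F_def
  proof (rule Max.boundedI)
    show "finite ((\<lambda>j. A i j + ereal (x j)) ` {1..n})" by simp
    show "(\<lambda>j. A i j + ereal (x j)) ` {1..n} \<noteq> {}" using fin by simp
    fix a assume "a \<in> (\<lambda>j. A i j + ereal (x j)) ` {1..n}"
    then obtain l where l: "l \<in> {1..n}" "a = A i l + ereal (x l)" by blast
    show "a \<le> ereal (mr - t)"
    proof (cases "l = j0")
      case True then show ?thesis using l Aj0 by simp
    next
      case False
      have "A i l \<le> ereal mr" using Mle[OF l(1)] mr by simp
      then have "A i l + ereal (- t) \<le> ereal mr + ereal (-t)" by (rule add_right_mono)
      then show ?thesis using l False by (simp add: x_def)
    qed
  qed
  ultimately have "ereal R \<le> ereal (mr - t)" using FR by (meson order.trans)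
  then show False by (simp add: t_def)
qed

theorem lemma2:
  fixes A :: "nat \<Rightarrow> nat \<Rightarrow> ereal" and m n :: nat and k :: "nat \<Rightarrow> real" and c :: real
  assumes m_pos: "1 \<le> m"
    and A_rmax: "\<forall>i\<in>{1..m}. \<forall>j\<in>{1..n}. A i j \<noteq> \<infinity>"
    and k_nonneg: "\<forall>j\<in>{1..n}. k j \<ge> 0"
    and k_nonzero: "\<exists>j\<in>{1..n}. k j \<noteq> 0"
    and rows: "\<forall>i\<in>{1..m}. \<exists>j\<in>{1..n}. A i j \<noteq> -\<infinity>"
    and cols: "\<forall>j\<in>{1..n}. (\<forall>i\<in>{1..m}. A i j = -\<infinity>) \<longrightarrow> k j > 0"
    and solv: "mp_solvable A m n k c"
  shows "(\<forall>i\<in>{1..m}. \<exists>r::real. mp_b A n k c i = ereal r) \<and>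
         (\<forall>j\<in>{1..n}. \<exists>r::real. mp_xstar A m (mp_b A n k c) j = ereal r)"
proof -
  have K: "\<And>i j. i \<in> {1..m} \<Longrightarrow> j \<in> mp_J n k \<Longrightarrow> A i j \<noteq> -\<infinity>"
    using key[OF A_rmax rows solv] unfolding mp_J_def by blast
  have B: "\<forall>i\<in>{1..m}. \<exists>r::real. mp_b A n k c i = ereal r"
    using K unfolding mp_b_def by auto
  have X: "\<exists>r::real. mp_xstar A m (mp_b A n k c) j = ereal r" if j: "j \<in> {1..n}" for j
  proof -
    let ?f = "\<lambda>i. mp_minus (mp_b A n k c i) (A i j)"
    have ne: "{1..m} \<noteq> {}" using m_pos by auto
    obtain i1 where i1: "i1 \<in> {1..m}" "A i1 j \<noteq> -\<infinity>"
    proof -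
      have "\<not> (\<forall>i\<in>{1..m}. A i j = -\<infinity>)"
      proof
        assume h: "\<forall>i\<in>{1..m}. A i j = -\<infinity>"
        then have jJ: "j \<in> mp_J n k" using cols j unfolding mp_J_def by auto
        have "A 1 j \<noteq> -\<infinity>" using K[of 1 j] jJ m_pos by simp
        then show False using h m_pos by (meson atLeastAtMost_iff order_refl)
      qed
      then show ?thesis using that by blast
    qed
    have vals: "?f i = \<infinity> \<or> (\<exists>r. ?f i = ereal r)" if ii: "i \<in> {1..m}" for i
    proof -
      obtain r where r: "mp_b A n k c i = ereal r" using B ii by blast
      have nI: "A i j \<noteq> \<infinity>" using A_rmax ii j by blast
      show ?thesis
      proof (cases "A i j = -\<infinity>")
        case True then show ?thesis unfolding mp_minus_def by simp
      next
        case False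
        with nI obtain a where a: "A i j = ereal a" by (cases "A i j") simp_all
        have "?f i = ereal (r - a)" unfolding mp_minus_def using r a by simp
        then show ?thesis by blast
      qed
    qed
    have eq: "mp_xstar A m (mp_b A n k c) j = Min (?f ` {1..m})"
      unfolding mp_xstar_def using ne by (simp add: cInf_eq_Min)
    have "Min (?f ` {1..m}) \<in> ?f ` {1..m}" by (rule Min_in) (use ne in auto)
    then obtain i0 where i0: "i0 \<in> {1..m}" "Min (?f ` {1..m}) = ?f i0" by blast
    have "Min (?f ` {1..m}) \<le> ?f i1" by (rule Min_le) (use i1 in auto)
    then have "?f i0 \<le> ?f i1" using i0(2) by simp
    moreover have "?f i1 \<noteq> \<infinity>"
    proof -
      obtain r where r: "mp_b A n k c i1 = ereal r" using B i1 by blast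
      have nI: "A i1 j \<noteq> \<infinity>" using A_rmax i1(1) j by blast
      obtain a where a: "A i1 j = ereal a" using nI i1(2) by (cases "A i1 j") simp_all
      show ?thesis unfolding mp_minus_def using r a by simp
    qed
    ultimately have "?f i0 \<noteq> \<infinity>" by (metis ereal_less_PInfty not_less_iff_gr_or_eq order.strict_trans1 top.extremum_strict)
    then obtain r where r: "?f i0 = ereal r" using vals[OF i0(1)] by blast
    show ?thesis by (rule exI[of _ r]) (simp only: eq i0(2) r)
  qed
  show ?thesis using B X by blast
qed

end
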